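(* Let $\pi:G\to\mathcal{U}(\mathcal{H}_\pi)$ be an integrable representation. Then $C_\pi(\mathcal{A})\subset\mathcal{D}(C_\pi)$.
   Context: $G$ is a $\sigma$-compact locally compact group; $\mathcal{W}_g f(x)=\langle f,\pi(x)g\rangle$. $\pi$ is integrable if irreducible unitary with some non-zero $g$ satisfying $\mathcal{W}_g g\in L^1(G)$; it is then square integrable. $\mathcal{A}=\{g\in\mathcal{H}_\pi:\mathcal{W}_g g\in L^1(G)\}$ (note $\mathcal{A}\subset\mathcal{D}(C_\pi)\cup\{0\}$ since $L^1\cap L^\infty\subset L^2$). $C_\pi:\mathcal{D}(C_\pi)\to\mathcal{H}_\pi$ is the Duflo–Moore operator: the unique self-adjoint positive densely defined injective operator such that the non-zero $g$ with $\mathcal{W}_g g\in L^2(G)$ are exactly the non-zero elements of $\mathcal{D}(C_\pi)$ and $\langle\mathcal{W}_{g_1}f_1,\mathcal{W}_{g_2}f_2\rangle_{L^2(G)}=\langle f_1,f_2\rangle\overline{\langle C_\pi g_1,C_\pi g_2\rangle}$ for $g_1,g_2\in\mathcal{D}(C_\pi)$, $f_1,f_2\in\mathcal{H}_\pi$. *)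

theory Defs
  imports "HOL-Analysis.Analysis"
begin

text \<open>A complex
Hilbert space is modelled as a real Hilbert space (real_inner + complete_space)
together with an operator J (multiplication by the imaginary unit): a real-linear
isometry with J (J x) = - x. The complex inner product (linear in the first
argument) is  <x,y> = x.y + i x.(J y).\<close>

definition complex_structure :: "('h::real_inner \<Rightarrow> 'h) \<Rightarrow> bool" where
  "complex_structure J \<longleftrightarrow> linear J \<and> (\<forall>x. J (J x) = - x) \<and> (\<forall>x. norm (J x) = norm x)"

definition cscale :: "('h::real_vector \<Rightarrow> 'h) \<Rightarrow> complex \<Rightarrow> 'h \<Rightarrow> 'h" where
  "cscale J c x = Re c *\<^sub>R x + Im c *\<^sub>R J x"

definition cinner :: "('h::real_inner \<Rightarrow> 'h) \<Rightarrow> 'h \<Rightarrow> 'h \<Rightarrow> complex" where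
  "cinner J x y = Complex (inner x y) (inner x (J y))"

definition csubspace :: "('h::real_vector \<Rightarrow> 'h) \<Rightarrow> 'h set \<Rightarrow> bool" where
  "csubspace J V \<longleftrightarrow> subspace V \<and> (\<forall>x\<in>V. J x \<in> V)"

definition clinear_op :: "('h::real_vector \<Rightarrow> 'h) \<Rightarrow> ('h \<Rightarrow> 'h) \<Rightarrow> bool" where
  "clinear_op J T \<longleftrightarrow> linear T \<and> (\<forall>x. T (J x) = J (T x))"

definition unitary_op :: "('h::real_inner \<Rightarrow> 'h) \<Rightarrow> ('h \<Rightarrow> 'h) \<Rightarrow> bool" where
  "unitary_op J U \<longleftrightarrow> clinear_op J U \<and> surj U \<and> (\<forall>x. norm (U x) = norm x)"

text \<open>A (not necessarily abelian) Hausdorff topological group written additively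
(class group_add is non-commutative).\<close>

definition locally_compact_sigma_compact_group :: "'g::{topological_group_add,t2_space} itself \<Rightarrow> bool" where
  "locally_compact_sigma_compact_group _ \<longleftrightarrow>
     (\<forall>x::'g. \<exists>U K. open U \<and> compact K \<and> x \<in> U \<and> U \<subseteq> K) \<and>
     (\<exists>K::nat \<Rightarrow> 'g set. (\<forall>n. compact (K n)) \<and> (\<Union>n. K n) = UNIV)"

definition left_haar_measure :: "'g::{topological_group_add,t2_space} measure \<Rightarrow> bool" where
  "left_haar_measure \<mu> \<longleftrightarrow>
     sets \<mu> = sets borel \<and>
     (\<forall>x A. A \<in> sets borel \<longrightarrow> emeasure \<mu> ((\<lambda>y. x + y) ` A) = emeasure \<mu> A) \<and>
     (\<forall>K. compact K \<longrightarrow> emeasure \<mu> K < \<infinity>) \<and>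
     (\<forall>U. open U \<and> U \<noteq> {} \<longrightarrow> emeasure \<mu> U > 0) \<and>
     (\<forall>A\<in>sets borel. emeasure \<mu> A = (INF U\<in>{U. open U \<and> A \<subseteq> U}. emeasure \<mu> U)) \<and>
     (\<forall>U. open U \<longrightarrow> emeasure \<mu> U = (SUP K\<in>{K. compact K \<and> K \<subseteq> U}. emeasure \<mu> K))"

definition unitary_rep :: "('h::real_inner \<Rightarrow> 'h) \<Rightarrow> ('g::topological_group_add \<Rightarrow> 'h \<Rightarrow> 'h) \<Rightarrow> bool" where
  "unitary_rep J \<pi> \<longleftrightarrow>
     (\<forall>x. unitary_op J (\<pi> x)) \<and> \<pi> 0 = id \<and> (\<forall>x y. \<pi> (x + y) = \<pi> x \<circ> \<pi> y) \<and>
     (\<forall>f. continuous_on UNIV (\<lambda>x. \<pi> x f))"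

definition irreducible_rep :: "('h::real_inner \<Rightarrow> 'h) \<Rightarrow> ('g::topological_group_add \<Rightarrow> 'h \<Rightarrow> 'h) \<Rightarrow> bool" where
  "irreducible_rep J \<pi> \<longleftrightarrow> unitary_rep J \<pi> \<and> (UNIV::'h set) \<noteq> {0} \<and>
     (\<forall>V. csubspace J V \<and> closed V \<and> (\<forall>x. \<pi> x ` V \<subseteq> V) \<longrightarrow> V = {0} \<or> V = UNIV)"

definition voice :: "('h::real_inner \<Rightarrow> 'h) \<Rightarrow> ('g \<Rightarrow> 'h \<Rightarrow> 'h) \<Rightarrow> 'h \<Rightarrow> 'h \<Rightarrow> 'g \<Rightarrow> complex" where
  "voice J \<pi> g f x = cinner J f (\<pi> x g)"

definition square_integrable :: "'g measure \<Rightarrow> ('g \<Rightarrow> complex) \<Rightarrow> bool" where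
  "square_integrable \<mu> F \<longleftrightarrow> F \<in> borel_measurable \<mu> \<and> integrable \<mu> (\<lambda>x. (cmod (F x))\<^sup>2)"

definition integrable_rep :: "'g::{topological_group_add,t2_space} measure \<Rightarrow> ('h::real_inner \<Rightarrow> 'h) \<Rightarrow> ('g \<Rightarrow> 'h \<Rightarrow> 'h) \<Rightarrow> bool" where
  "integrable_rep \<mu> J \<pi> \<longleftrightarrow> irreducible_rep J \<pi> \<and>
     (\<exists>g. g \<noteq> 0 \<and> integrable \<mu> (voice J \<pi> g g))"

definition A_set :: "'g measure \<Rightarrow> ('h::real_inner \<Rightarrow> 'h) \<Rightarrow> ('g \<Rightarrow> 'h \<Rightarrow> 'h) \<Rightarrow> 'h set" where
  "A_set \<mu> J \<pi> = {g. integrable \<mu> (voice J \<pi> g g)}"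

text \<open>Such C is unique,
so assuming these properties identifies C_pi.\<close>

definition duflo_moore :: "'g::{topological_group_add,t2_space} measure \<Rightarrow> ('h::{real_inner,complete_space} \<Rightarrow> 'h) \<Rightarrow>
    ('g \<Rightarrow> 'h \<Rightarrow> 'h) \<Rightarrow> ('h \<Rightarrow> 'h) \<Rightarrow> 'h set \<Rightarrow> bool" where
  "duflo_moore \<mu> J \<pi> C D \<longleftrightarrow>
     csubspace J D \<and> closure D = UNIV \<and>
     (\<forall>x\<in>D. \<forall>y\<in>D. C (x + y) = C x + C y) \<and>
     (\<forall>x\<in>D. \<forall>c. C (cscale J c x) = cscale J c (C x)) \<and>
     (\<forall>y. (\<exists>z. \<forall>x\<in>D. cinner J (C x) y = cinner J x z) \<longleftrightarrow> y \<in> D) \<and>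
     (\<forall>x\<in>D. \<forall>y\<in>D. cinner J (C x) y = cinner J x (C y)) \<and>
     (\<forall>x\<in>D. Re (cinner J (C x) x) \<ge> 0) \<and>
     inj_on C D \<and>
     (\<forall>g. g \<noteq> 0 \<longrightarrow> (square_integrable \<mu> (voice J \<pi> g g) \<longleftrightarrow> g \<in> D)) \<and>
     (\<forall>g1\<in>D. \<forall>g2\<in>D. \<forall>f1 f2.
        square_integrable \<mu> (voice J \<pi> g1 f1) \<and>
        (LINT x|\<mu>. voice J \<pi> g1 f1 x * cnj (voice J \<pi> g2 f2 x))
          = cinner J f1 f2 * cnj (cinner J (C g1) (C g2)))"

end

theory Submission
  imports Defs
begin

lemma riesz_real:
  fixes L :: "'h::{real_inner,complete_space} \<Rightarrow> real"
  assumes bl: "bounded_linear L"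
  shows "\<exists>z. \<forall>x. L x = inner x z"
proof -
  interpret L: bounded_linear L by fact
  obtain K where K: "\<And>x. norm (L x) \<le> norm x * K" "K > 0" using L.pos_bounded by blast
  define F where "F x = (norm x)^2/2 - L x" for x
  have Flow: "F x \<ge> -(K^2)/2" for x
  proof -
    have "L x \<le> norm x * K" using K(1)[of x] by simp
    moreover have "0 \<le> (norm x - K)^2" by simp
    ultimately show ?thesis unfolding F_def by (simp add: power2_eq_square algebra_simps)
  qed
  define m where "m = Inf (range F)"
  have bdd: "bdd_below (range F)" using Flow by (intro bdd_belowI[of _ "-(K^2)/2"]) auto
  have m_le: "m \<le> F x" for x unfolding m_def by (rule cInf_lower[OF _ bdd]) simp
  have "\<exists>x. F x < m + 1/Suc n" for n
  proof -
    have "Inf (range F) < m + 1/Suc n" unfolding m_def by simp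
    from cInf_lessD[OF _ this] show ?thesis by auto
  qed
  then obtain xs where xs: "\<And>n. F (xs n) < m + 1/Suc n" by metis
  have par: "(norm (x-y))^2 = 4*(F x + F y - 2 * F ((1/2) *\<^sub>R (x+y)))" for x y
  proof -
    have 1: "(norm (x-y))^2 = inner x x + inner y y - 2 * inner x y"
      by (simp add: power2_norm_eq_inner inner_simps inner_commute)
    have 2: "(norm ((1/2) *\<^sub>R (x+y)))^2 = (inner x x + inner y y + 2 * inner x y)/4"
    proof -
      have "norm ((1/2) *\<^sub>R (x+y)) = norm (x+y)/2" by simp
      moreover have "(norm (x+y))^2 = inner x x + inner y y + 2 * inner x y"
        by (simp add: power2_norm_eq_inner inner_simps inner_commute)
      ultimately show ?thesis by (simp add: power_divide)
    qed
    have 3: "L ((1/2) *\<^sub>R (x+y)) = (L x + L y)/2" by (simp add: L.scaleR L.add)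
    show ?thesis unfolding F_def 1 2 3 by (simp add: field_simps power2_norm_eq_inner)
  qed
  have dist_bound: "(norm (xs n - xs k))^2 < 4 * (1/Suc n + 1/Suc k)" for n k
    using par[of "xs n" "xs k"] xs[of n] xs[of k] m_le[of "(1/2) *\<^sub>R (xs n + xs k)"] by argo
  have "Cauchy xs"
  proof (rule CauchyI)
    fix e :: real assume e: "0 < e"
    obtain N :: nat where N: "8 / e^2 < real N" using reals_Archimedean2 by blast
    have Npos: "8 / real (Suc N) < e^2"
      using N e by (simp add: field_simps) (insert zero_less_power[OF e, of 2], linarith)
    show "\<exists>M. \<forall>m\<ge>M. \<forall>n\<ge>M. norm (xs m - xs n) < e"
    proof (intro exI allI impI)
      fix a b assume ab: "N \<le> a" "N \<le> b"
      have "1/real (Suc a) \<le> 1/Suc N" "1/real (Suc b) \<le> 1/Suc N" using ab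
        by (simp_all add: frac_le)
      then have "(norm (xs a - xs b))^2 < e^2" using dist_bound[of a b] Npos by simp
      then show "norm (xs a - xs b) < e" using e by (simp add: power_less_imp_less_base)
    qed
  qed
  then obtain z where z: "xs \<longlonglongrightarrow> z" using Cauchy_convergent convergent_def by blast
  have "(\<lambda>n. F (xs n)) \<longlonglongrightarrow> F z" unfolding F_def
    by (intro tendsto_intros L.tendsto z) simp
  moreover have "(\<lambda>n. m + 1/Suc n) \<longlonglongrightarrow> m"
    using tendsto_add[OF tendsto_const LIMSEQ_inverse_real_of_nat, of m] by (simp add: inverse_eq_divide)
  ultimately have "F z \<le> m" using xs by (intro LIMSEQ_le) (auto intro: less_imp_le)
  then have zmin: "F z \<le> F x" for x using m_le[of x] by linarith
  have "L v = inner v z" for v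
  proof (rule ccontr)
    assume ne: "L v \<noteq> inner v z"
    define a where "a = inner z v - L v"
    define b where "b = (norm v)^2/2"
    have b: "b \<ge> 0" unfolding b_def by simp
    have exp: "F (z + t *\<^sub>R v) - F z = t * a + t^2 * b" for t
    proof -
      have "(norm (z + t *\<^sub>R v))^2 = inner z z + 2*t*inner z v + t^2*inner v v"
        unfolding power2_norm_eq_inner by (simp add: inner_simps inner_commute algebra_simps power2_eq_square)
      then show ?thesis
      unfolding F_def a_def b_def L.add L.scaleR
      by (simp add: power2_norm_eq_inner field_simps)
    qed
    define s where "s = 1/(b+1)"
    have s0: "s > 0" using b by (simp add: s_def)
    have sb: "s * b < 1" using b by (simp add: s_def field_simps)
    define t where "t = - (a * s)"
    have a0: "a \<noteq> 0" using ne by (simp add: a_def inner_commute)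
    have "t * a + t^2 * b = (s * a^2) * (s * b - 1)"
      unfolding t_def by (simp add: algebra_simps power2_eq_square)
    also have "\<dots> < 0" using a0 s0 sb by (intro mult_pos_neg) auto
    finally show False using exp[of t] zmin[of "z + t *\<^sub>R v"] by linarith
  qed
  then show ?thesis by blast
qed


lemma iso_inner:
  fixes U :: "'h::real_inner \<Rightarrow> 'h"
  assumes "linear U" "\<And>x. norm (U x) = norm x"
  shows "inner (U x) (U y) = inner x y"
proof -
  have n: "inner (U a) (U a) = inner a a" for a
    using assms(2)[of a] by (metis power2_norm_eq_inner)
  have "inner (U (x+y)) (U (x+y)) = inner (x+y) (x+y)" by (rule n)
  then show ?thesis using n[of x] n[of y] linear_add[OF assms(1)]
    by (simp add: inner_simps inner_commute)
qed

lemma cs_facts: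
  assumes "complex_structure J"
  shows "linear J" "\<And>x. J (J x) = - x" "\<And>x. norm (J x) = norm x"
    "bounded_linear J" "\<And>x y. inner (J x) (J y) = inner x y"
    "\<And>x y. inner (J x) y = - inner x (J y)" "\<And>x. inner x (J x) = 0"
proof -
  show l: "linear J" and jj: "\<And>x. J (J x) = - x" and n: "\<And>x. norm (J x) = norm x"
    using assms by (auto simp: complex_structure_def)
  show "bounded_linear J"
    by (rule bounded_linear_intro[of J 1]) (auto simp: linear_add[OF l] linear_scale[OF l] n)
  show ii: "\<And>x y. inner (J x) (J y) = inner x y" by (rule iso_inner[OF l n])
  show ij: "\<And>x y. inner (J x) y = - inner x (J y)"
  proof -
    fix x y
    have "inner (J x) y = inner (J (J x)) (J y)" by (rule ii[symmetric])
    then show "inner (J x) y = - inner x (J y)" by (simp add: jj)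
  qed
  show "\<And>x. inner x (J x) = 0"
  proof -
    fix x
    have "inner (J x) x = - inner x (J x)" by (rule ij)
    then show "inner x (J x) = 0" by (simp add: inner_commute)
  qed
qed

lemma cinner_bound:
  assumes "complex_structure J"
  shows "cmod (cinner J x v) \<le> norm x * norm v"
proof -
  note cs = cs_facts[OF assms]
  define a where "a = inner x v"
  define b where "b = inner x (J v)"
  define S where "S = a^2 + b^2"
  have cm: "cmod (cinner J x v) = sqrt S" unfolding cinner_def S_def a_def b_def cmod_def by simp
  have "S = inner x (a *\<^sub>R v + b *\<^sub>R J v)" unfolding S_def a_def b_def
    by (simp add: inner_simps power2_eq_square)
  also have "\<dots> \<le> norm x * norm (a *\<^sub>R v + b *\<^sub>R J v)" by (rule norm_cauchy_schwarz)
  also have "norm (a *\<^sub>R v + b *\<^sub>R J v) = sqrt S * norm v"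
  proof -
    have "(norm (a *\<^sub>R v + b *\<^sub>R J v))^2 = S * (norm v)^2"
      unfolding power2_norm_eq_inner S_def
      using cs(5)[of v v] cs(7)[of v] by (simp add: inner_simps inner_commute algebra_simps power2_eq_square)
    then have "norm (a *\<^sub>R v + b *\<^sub>R J v) = sqrt (S * (norm v)^2)"
      by (metis norm_ge_zero real_sqrt_unique)
    then show ?thesis by (simp add: real_sqrt_mult)
  qed
  finally have S1: "S \<le> norm x * (sqrt S * norm v)" .
  have S0: "S \<ge> 0" unfolding S_def by simp
  have S2: "sqrt S * sqrt S = S" using S0 by simp
  have "sqrt S \<ge> 0" using S0 by simp
  have "sqrt S * sqrt S \<le> sqrt S * (norm x * norm v)" unfolding S2 using S1 by (simp add: algebra_simps)
  then have "sqrt S \<le> norm x * norm v"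
  proof (cases "sqrt S = 0")
    case True then show ?thesis by simp
  next
    case False
    then have "sqrt S > 0" using \<open>sqrt S \<ge> 0\<close> by linarith
    then show ?thesis using \<open>sqrt S * sqrt S \<le> sqrt S * (norm x * norm v)\<close>
      using mult_le_cancel_left_pos by blast
  qed
  then show ?thesis using cm by simp
qed

lemma cinner_facts:
  assumes "complex_structure J"
  shows "\<And>x y v. cinner J (x + y) v = cinner J x v + cinner J y v"
    "\<And>r x v. cinner J (r *\<^sub>R x) v = of_real r * cinner J x v"
    "\<And>x v. cinner J (J x) v = \<i> * cinner J x v"
    "\<And>a b. cnj (cinner J a b) = cinner J b a"
    "\<And>r x v. cinner J x (r *\<^sub>R v) = of_real r * cinner J x v"
    "\<And>g. cinner J g g = of_real ((norm g)^2)"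
    "\<And>x v. cinner J x v = of_real (inner x v) + \<i> * of_real (inner x (J v))"
proof -
  note cs = cs_facts[OF assms]
  show "\<And>x y v. cinner J (x + y) v = cinner J x v + cinner J y v"
    by (simp add: cinner_def inner_simps complex_eq_iff)
  show "\<And>r x v. cinner J (r *\<^sub>R x) v = of_real r * cinner J x v"
    by (simp add: cinner_def inner_simps complex_eq_iff)
  show "\<And>x v. cinner J (J x) v = \<i> * cinner J x v"
    by (simp add: cinner_def complex_eq_iff cs(5) cs(6) cs(2) inner_simps)
  show "\<And>a b. cnj (cinner J a b) = cinner J b a"
    by (simp add: cinner_def complex_eq_iff inner_commute; metis cs(6) inner_commute)
  show "\<And>r x v. cinner J x (r *\<^sub>R v) = of_real r * cinner J x v"
    by (simp add: cinner_def complex_eq_iff linear_scale[OF cs(1)] inner_simps)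
  show "\<And>g. cinner J g g = of_real ((norm g)^2)"
    by (simp add: cinner_def complex_eq_iff cs(7) power2_norm_eq_inner)
  show "\<And>x v. cinner J x v = of_real (inner x v) + \<i> * of_real (inner x (J v))"
    by (simp add: cinner_def Complex_eq)
qed

lemma unitary_facts:
  assumes "unitary_rep J \<pi>"
  shows "\<And>y. linear (\<pi> y)" "\<And>y x. norm (\<pi> y x) = norm x" "\<And>y x. \<pi> y (J x) = J (\<pi> y x)"
    "\<And>y v. \<pi> y (\<pi> (-y) v) = v"
    "\<And>y a b. inner (\<pi> y a) (\<pi> y b) = inner a b"
    "\<And>y a b. cinner J (\<pi> y a) (\<pi> y b) = cinner J a b"
proof -
  show l: "\<And>y. linear (\<pi> y)" and n: "\<And>y x. norm (\<pi> y x) = norm x"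
    and c: "\<And>y x. \<pi> y (J x) = J (\<pi> y x)"
    using assms by (auto simp: unitary_rep_def unitary_op_def clinear_op_def)
  show "\<And>y v. \<pi> y (\<pi> (-y) v) = v"
  proof -
    fix y v
    have h: "\<forall>x y. \<pi> (x + y) = \<pi> x \<circ> \<pi> y" and h0: "\<pi> 0 = id"
      using assms by (auto simp add: unitary_rep_def)
    then show "\<pi> y (\<pi> (-y) v) = v" by (metis comp_apply right_minus id_apply)
  qed
  show i: "\<And>y a b. inner (\<pi> y a) (\<pi> y b) = inner a b" by (rule iso_inner[OF l n])
  show "\<And>y a b. cinner J (\<pi> y a) (\<pi> y b) = cinner J a b"
    by (simp add: cinner_def i flip: c)
qed


theorem mainTheorem11:
  fixes \<mu> :: "'g::{topological_group_add,t2_space} measure"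
    and J :: "'h::{real_inner,complete_space} \<Rightarrow> 'h"
    and \<pi> :: "'g \<Rightarrow> 'h \<Rightarrow> 'h"
    and C :: "'h \<Rightarrow> 'h" and D :: "'h set"
  assumes "locally_compact_sigma_compact_group TYPE('g)"
    and "left_haar_measure \<mu>"
    and "complex_structure J"
    and "integrable_rep \<mu> J \<pi>"
    and "duflo_moore \<mu> J \<pi> C D"
  shows "C ` A_set \<mu> J \<pi> \<subseteq> D"
proof
  fix h assume "h \<in> C ` A_set \<mu> J \<pi>"
  then obtain g where gA: "g \<in> A_set \<mu> J \<pi>" and hg: "h = C g" by blast
  have sets_eq: "sets \<mu> = sets borel" using assms(2) by (simp add: left_haar_measure_def)
  note cs = cs_facts[OF assms(3)]
  note ci = cinner_facts[OF assms(3)]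
  have ur: "unitary_rep J \<pi>" using assms(4) by (simp add: integrable_rep_def irreducible_rep_def)
  note uf = unitary_facts[OF ur]
  have contpi: "continuous_on UNIV (\<lambda>x. \<pi> x f)" for f using ur by (simp add: unitary_rep_def)
  note dm = assms(5)[unfolded duflo_moore_def]
  have subD: "subspace D" using dm[THEN conjunct1] by (simp add: csubspace_def)
  have Cadd: "\<forall>x\<in>D. \<forall>y\<in>D. C (x + y) = C x + C y" using dm[THEN conjunct2, THEN conjunct2, THEN conjunct1] .
  have adj0: "\<forall>y. (\<exists>z. \<forall>x\<in>D. cinner J (C x) y = cinner J x z) \<longleftrightarrow> y \<in> D"
    using dm[THEN conjunct2, THEN conjunct2, THEN conjunct2, THEN conjunct2, THEN conjunct1] .
  have adj: "\<And>y. (\<exists>z. \<forall>x\<in>D. cinner J (C x) y = cinner J x z) \<longleftrightarrow> y \<in> D"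
    using adj0 by (rule spec)
  have sqD0: "\<forall>g. g \<noteq> 0 \<longrightarrow> (square_integrable \<mu> (voice J \<pi> g g) \<longleftrightarrow> g \<in> D)"
    using dm[THEN conjunct2, THEN conjunct2, THEN conjunct2, THEN conjunct2, THEN conjunct2,
       THEN conjunct2, THEN conjunct2, THEN conjunct2, THEN conjunct1] .
  have sqD: "\<And>g. g \<noteq> 0 \<Longrightarrow> (square_integrable \<mu> (voice J \<pi> g g) \<longleftrightarrow> g \<in> D)"
    using sqD0 by blast
  have orth0: "\<forall>g1\<in>D. \<forall>g2\<in>D. \<forall>f1 f2.
        square_integrable \<mu> (voice J \<pi> g1 f1) \<and>
        (LINT x|\<mu>. voice J \<pi> g1 f1 x * cnj (voice J \<pi> g2 f2 x))
          = cinner J f1 f2 * cnj (cinner J (C g1) (C g2))"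
    using dm[THEN conjunct2, THEN conjunct2, THEN conjunct2, THEN conjunct2, THEN conjunct2,
       THEN conjunct2, THEN conjunct2, THEN conjunct2, THEN conjunct2] .
  have orth: "\<And>g1 g2 f1 f2. g1 \<in> D \<Longrightarrow> g2 \<in> D \<Longrightarrow>
        (LINT x|\<mu>. voice J \<pi> g1 f1 x * cnj (voice J \<pi> g2 f2 x))
          = cinner J f1 f2 * cnj (cinner J (C g1) (C g2))"
    using orth0 by blast
  show "h \<in> D"
  proof (cases "g = 0")
    case True
    have "0 \<in> D" using subD by (rule subspace_0)
    then have "C 0 = 0" using Cadd by (metis add_cancel_right_right add_0)
    then show ?thesis using hg True \<open>0 \<in> D\<close> by simp
  next
    case gne: False
    define w where "w y = voice J \<pi> g g y" for y
    have intw: "integrable \<mu> w" using gA by (simp add: A_set_def w_def[abs_def])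
    have wmeas: "w \<in> borel_measurable \<mu>" using intw by (rule borel_measurable_integrable)
    have wbound: "cmod (w y) \<le> (norm g)^2" for y
      using cinner_bound[OF assms(3), of g "\<pi> y g"] by (simp add: w_def voice_def uf(2) power2_eq_square)
    have gD: "g \<in> D"
    proof -
      have i1: "integrable \<mu> (\<lambda>y. (norm g)^2 * cmod (w y))"
        using intw by (intro integrable_mult_right integrable_norm)
      have i2: "(\<lambda>y. (cmod (w y))^2) \<in> borel_measurable \<mu>" using wmeas by measurable
      have i3: "AE y in \<mu>. norm ((cmod (w y))^2) \<le> norm ((norm g)^2 * cmod (w y))"
      proof (rule AE_I2)
        fix y
        have "(cmod (w y))^2 = cmod (w y) * cmod (w y)" by (simp add: power2_eq_square)
        also have "\<dots> \<le> (norm g)^2 * cmod (w y)" using wbound[of y] by (intro mult_right_mono) auto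
        finally show "norm ((cmod (w y))^2) \<le> norm ((norm g)^2 * cmod (w y))" by simp
      qed
      have "integrable \<mu> (\<lambda>y. (cmod (w y))^2)" using Bochner_Integration.integrable_bound[OF i1 i2 i3] .
      then have "square_integrable \<mu> (voice J \<pi> g g)"
        using wmeas unfolding square_integrable_def w_def[abs_def] by simp
      then show ?thesis using sqD gne by blast
    qed
    have contv: "continuous_on UNIV (\<lambda>y. \<pi> (-y) g)"
      by (rule continuous_on_compose2[OF contpi continuous_on_minus[OF continuous_on_id]]) auto
    have contJv: "continuous_on UNIV (\<lambda>y. J (\<pi> (-y) g))"
      by (rule continuous_on_compose2[OF linear_continuous_on[OF cs(4)] contv]) auto
    have hmeas: "(\<lambda>y. cinner J x (\<pi> (-y) g)) \<in> borel_measurable \<mu>" for x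
    proof -
      have "continuous_on UNIV (\<lambda>y. cinner J x (\<pi> (-y) g))"
        unfolding ci(7) by (intro continuous_intros contv contJv)
      then have "(\<lambda>y. cinner J x (\<pi> (-y) g)) \<in> borel_measurable borel"
        by (rule borel_measurable_continuous_onI)
      moreover have "(borel_measurable \<mu> :: ('g \<Rightarrow> complex) set) = borel_measurable borel"
        by (rule measurable_cong_sets[OF sets_eq refl])
      ultimately show ?thesis by simp
    qed
    define I where "I x = (LINT y|\<mu>. cinner J x (\<pi> (-y) g) * w y)" for x
    have hint: "integrable \<mu> (\<lambda>y. cinner J x (\<pi> (-y) g) * w y)" for x
    proof (rule Bochner_Integration.integrable_bound)
      show "integrable \<mu> (\<lambda>y. (norm x * norm g) * cmod (w y))"
        using intw by (intro integrable_mult_right integrable_norm)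
      show "(\<lambda>y. cinner J x (\<pi> (-y) g) * w y) \<in> borel_measurable \<mu>"
        using hmeas wmeas by (rule borel_measurable_times)
      show "AE y in \<mu>. norm (cinner J x (\<pi> (-y) g) * w y) \<le> norm ((norm x * norm g) * cmod (w y))"
      proof (rule AE_I2)
        fix y
        have "norm (cinner J x (\<pi> (-y) g) * w y) = cmod (cinner J x (\<pi> (-y) g)) * cmod (w y)"
          by (simp add: norm_mult)
        also have "\<dots> \<le> (norm x * norm g) * cmod (w y)"
          using cinner_bound[OF assms(3), of x "\<pi> (-y) g"] by (intro mult_right_mono) (auto simp: uf(2))
        finally show "norm (cinner J x (\<pi> (-y) g) * w y) \<le> norm ((norm x * norm g) * cmod (w y))"
          by simp
      qed
    qed
    define K where "K = norm g * (LINT y|\<mu>. cmod (w y))"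
    have Iadd: "I (x + y) = I x + I y" for x y
      unfolding I_def ci(1) distrib_right by (rule Bochner_Integration.integral_add[OF hint hint])
    have Iscale: "I (r *\<^sub>R x) = of_real r * I x" for r x
      unfolding I_def ci(2) mult.assoc by (rule integral_mult_right_zero)
    have IJ: "I (J x) = \<i> * I x" for x
      unfolding I_def ci(3) mult.assoc by (rule integral_mult_right_zero)
    have Ibound: "cmod (I x) \<le> norm x * K" for x
    proof -
      have "cmod (I x) \<le> (LINT y|\<mu>. norm (cinner J x (\<pi> (-y) g) * w y))"
        unfolding I_def by (rule integral_norm_bound)
      also have "\<dots> \<le> (LINT y|\<mu>. (norm x * norm g) * cmod (w y))"
      proof (rule integral_mono)
        show "integrable \<mu> (\<lambda>y. norm (cinner J x (\<pi> (-y) g) * w y))" using hint by (rule integrable_norm)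
        show "integrable \<mu> (\<lambda>y. (norm x * norm g) * cmod (w y))"
          using intw by (intro integrable_mult_right integrable_norm)
        fix y
        show "norm (cinner J x (\<pi> (-y) g) * w y) \<le> (norm x * norm g) * cmod (w y)"
          using cinner_bound[OF assms(3), of x "\<pi> (-y) g"]
          by (simp add: norm_mult uf(2)) (intro mult_right_mono, auto)
      qed
      also have "\<dots> = norm x * K" unfolding K_def by simp
      finally show ?thesis .
    qed
    have blin: "bounded_linear (\<lambda>x. Re (I x))"
    proof (rule bounded_linear_intro[of _ K])
      show "Re (I (x + y)) = Re (I x) + Re (I y)" for x y by (simp add: Iadd)
      show "Re (I (r *\<^sub>R x)) = r *\<^sub>R Re (I x)" for r x by (simp add: Iscale)
      show "norm (Re (I x)) \<le> norm x * K" for x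
        using abs_Re_le_cmod[of "I x"] Ibound[of x] by simp
    qed
    obtain z0 where z0: "\<And>x. Re (I x) = inner x z0" using riesz_real[OF blin] by blast
    have Iz0: "I x = cinner J x z0" for x
    proof (rule complex_eqI)
      show "Re (I x) = Re (cinner J x z0)" by (simp add: z0 cinner_def)
      have "Re (I (J x)) = - Im (I x)" by (simp add: IJ)
      then have "Im (I x) = - inner (J x) z0" by (simp add: z0)
      then show "Im (I x) = Im (cinner J x z0)" by (simp add: cinner_def cs(6))
    qed
    define z where "z = (1 / (norm g)^2) *\<^sub>R z0"
    have "\<forall>x\<in>D. cinner J (C x) (C g) = cinner J x z"
    proof
      fix x assume xD: "x \<in> D"
      have pt: "cnj (voice J \<pi> x g y * cnj (voice J \<pi> g g y)) = cinner J x (\<pi> (-y) g) * w y" for y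
      proof -
        have "cnj (voice J \<pi> x g y) = cinner J (\<pi> y x) g"
          by (simp add: voice_def ci(4))
        also have "\<dots> = cinner J (\<pi> y x) (\<pi> y (\<pi> (-y) g))" by (simp add: uf(4))
        also have "\<dots> = cinner J x (\<pi> (-y) g)" by (rule uf(6))
        finally show ?thesis by (simp add: w_def)
      qed
      have "I x = cnj (LINT y|\<mu>. voice J \<pi> x g y * cnj (voice J \<pi> g g y))"
        unfolding I_def pt[symmetric] by (rule Bochner_Integration.integral_cnj)
      also have "\<dots> = cnj (cinner J g g) * cinner J (C x) (C g)"
        using orth[OF xD gD, of g g] by simp
      also have "\<dots> = of_real ((norm g)^2) * cinner J (C x) (C g)" by (simp add: ci(6))
      finally have "cinner J (C x) (C g) = I x / of_real ((norm g)^2)" using gne by simp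
      also have "\<dots> = cinner J x z" unfolding z_def ci(5) Iz0 by (simp add: divide_inverse mult.commute)
      finally show "cinner J (C x) (C g) = cinner J x z" .
    qed
    then have "C g \<in> D" using adj by blast
    then show ?thesis using hg by simp
  qed
qed

end
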